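(* Let $A$ be a skew brace and endow $\mathrm{Spec}\,A$ with the spectral topology. Then every irreducible closed subset of $\mathrm{Spec}\,A$ has a unique generic point.
   Context: A (left) skew brace is a triple $(A,+,\circ)$ where $(A,+)$ and $(A,\circ)$ are groups (not necessarily abelian) such that $a\circ(b+c)=a\circ b-a+a\circ c$ for all $a,b,c\in A$; the two groups share an identity element $e$. For $a\in A$ put $\lambda_a(b)=-a+a\circ b$ and define $a*b=-a+a\circ b-b$. An ideal of $A$ is a subset $I$ that is a normal subgroup of both $(A,+)$ and $(A,\circ)$ with $\lambda_a(I)\subseteq I$ for all $a\in A$. For subsets $I,J\subseteq A$ write $I*J=\{i*j\mid i\in I,j\in J\}$. A prime ideal of $A$ is a proper ideal $P\neq A$ such that for any subsets $I,J$ of $A$, $I*J\subseteq P$ implies $I\subseteq P$ or $J\subseteq P$. $\mathrm{Spec}\,A$ is the set of prime ideals of $A$. For an ideal $I$ let $H(I)=\{P\in\mathrm{Spec}\,A\mid I\subseteq P\}$; the spectral topology on $\mathrm{Spec}\,A$ is the topology whose closed sets are the sets $H(I)$, $I$ an ideal of $A$. A closed subset $S$ of a topological space is irreducible if $S$ is not the union of two closed subsets $S_1,S_2\subsetneq S$. A point $x\in S$ is a generic point of the closed set $S$ if $S=\mathrm{cl}(\{x\})$. *)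

theory Defs
  imports "HOL-Algebra.Coset"
begin

text \<open>A skew brace on the common carrier of two groups: G is the additive
  group (A,+) (written with the HOL-Algebra product), C is the
  multiplicative group (A,o).\<close>

definition skew_brace :: "'a monoid \<Rightarrow> 'a monoid \<Rightarrow> bool" where
  "skew_brace G C \<longleftrightarrow> group G \<and> group C \<and> carrier C = carrier G \<and> \<one>\<^bsub>C\<^esub> = \<one>\<^bsub>G\<^esub> \<and>
     (\<forall>a\<in>carrier G. \<forall>b\<in>carrier G. \<forall>c\<in>carrier G.
        a \<otimes>\<^bsub>C\<^esub> (b \<otimes>\<^bsub>G\<^esub> c) = (a \<otimes>\<^bsub>C\<^esub> b) \<otimes>\<^bsub>G\<^esub> inv\<^bsub>G\<^esub> a \<otimes>\<^bsub>G\<^esub> (a \<otimes>\<^bsub>C\<^esub> c))"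

definition brace_lambda :: "'a monoid \<Rightarrow> 'a monoid \<Rightarrow> 'a \<Rightarrow> 'a \<Rightarrow> 'a" where
  "brace_lambda G C a b = inv\<^bsub>G\<^esub> a \<otimes>\<^bsub>G\<^esub> (a \<otimes>\<^bsub>C\<^esub> b)"

definition brace_star :: "'a monoid \<Rightarrow> 'a monoid \<Rightarrow> 'a \<Rightarrow> 'a \<Rightarrow> 'a" where
  "brace_star G C a b = inv\<^bsub>G\<^esub> a \<otimes>\<^bsub>G\<^esub> (a \<otimes>\<^bsub>C\<^esub> b) \<otimes>\<^bsub>G\<^esub> inv\<^bsub>G\<^esub> b"

definition brace_star_set :: "'a monoid \<Rightarrow> 'a monoid \<Rightarrow> 'a set \<Rightarrow> 'a set \<Rightarrow> 'a set" where
  "brace_star_set G C I J = {brace_star G C i j | i j. i \<in> I \<and> j \<in> J}"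

definition brace_ideal :: "'a monoid \<Rightarrow> 'a monoid \<Rightarrow> 'a set \<Rightarrow> bool" where
  "brace_ideal G C I \<longleftrightarrow> I \<lhd> G \<and> I \<lhd> C \<and>
     (\<forall>a\<in>carrier G. brace_lambda G C a ` I \<subseteq> I)"

definition brace_prime_ideal :: "'a monoid \<Rightarrow> 'a monoid \<Rightarrow> 'a set \<Rightarrow> bool" where
  "brace_prime_ideal G C P \<longleftrightarrow> brace_ideal G C P \<and> P \<noteq> carrier G \<and>
     (\<forall>I J. I \<subseteq> carrier G \<longrightarrow> J \<subseteq> carrier G \<longrightarrow>
        brace_star_set G C I J \<subseteq> P \<longrightarrow> I \<subseteq> P \<or> J \<subseteq> P)"

definition brace_Spec :: "'a monoid \<Rightarrow> 'a monoid \<Rightarrow> 'a set set" where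
  "brace_Spec G C = {P. brace_prime_ideal G C P}"

definition brace_H :: "'a monoid \<Rightarrow> 'a monoid \<Rightarrow> 'a set \<Rightarrow> 'a set set" where
  "brace_H G C I = {P \<in> brace_Spec G C. I \<subseteq> P}"

definition spec_closed :: "'a monoid \<Rightarrow> 'a monoid \<Rightarrow> 'a set set \<Rightarrow> bool" where
  "spec_closed G C S \<longleftrightarrow> (\<exists>I. brace_ideal G C I \<and> S = brace_H G C I)"

text \<open>Closure: intersection of all closed sets containing X (Spec itself is closed).\<close>
definition spec_closure :: "'a monoid \<Rightarrow> 'a monoid \<Rightarrow> 'a set set \<Rightarrow> 'a set set" where
  "spec_closure G C X = \<Inter>{S. spec_closed G C S \<and> X \<subseteq> S}"

definition spec_irreducible :: "'a monoid \<Rightarrow> 'a monoid \<Rightarrow> 'a set set \<Rightarrow> bool" where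
  "spec_irreducible G C S \<longleftrightarrow> spec_closed G C S \<and> S \<noteq> {} \<and>
     \<not> (\<exists>S1 S2. spec_closed G C S1 \<and> spec_closed G C S2 \<and> S1 \<subset> S \<and> S2 \<subset> S \<and> S = S1 \<union> S2)"

end

theory Submission
  imports Defs
begin

lemma normal_Inter:
  assumes "group G" "F \<noteq> {}" "\<And>K. K \<in> F \<Longrightarrow> K \<lhd> G"
  shows "\<Inter>F \<lhd> G"
proof -
  have sg: "subgroup (\<Inter>F) G"
    using group.subgroups_Inter[OF assms(1)] assms(2,3) normal_imp_subgroup by blast
  show ?thesis
    unfolding group.normal_inv_iff[OF assms(1)]
    using sg assms(3) group.normal_inv_iff[OF assms(1)] by blast
qed

lemma ideal_Inter:
  assumes "group G" "group C" "F \<noteq> {}" "\<And>K. K \<in> F \<Longrightarrow> brace_ideal G C K"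
  shows "brace_ideal G C (\<Inter>F)"
  unfolding brace_ideal_def
proof (intro conjI)
  show "\<Inter>F \<lhd> G" using normal_Inter[OF assms(1,3)] assms(4) brace_ideal_def by blast
  show "\<Inter>F \<lhd> C" using normal_Inter[OF assms(2,3)] assms(4) brace_ideal_def by blast
  show "\<forall>a\<in>carrier G. brace_lambda G C a ` \<Inter>F \<subseteq> \<Inter>F"
    using assms(4) unfolding brace_ideal_def by blast
qed

lemma ideal_carrier:
  assumes "group G" "group C" "carrier C = carrier G"
  shows "brace_ideal G C (carrier G)"
  unfolding brace_ideal_def
proof (intro conjI)
  show "carrier G \<lhd> G" using group.normal_inv_iff[OF assms(1)] group.subgroup_self[OF assms(1)]
    by (simp add: monoid.m_closed group.inv_closed assms(1) group.is_monoid)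
  show "carrier G \<lhd> C" using group.normal_inv_iff[OF assms(2)] group.subgroup_self[OF assms(2)]
    assms(3) by (metis monoid.m_closed group.inv_closed assms(2) group.is_monoid)
  show "\<forall>a\<in>carrier G. brace_lambda G C a ` carrier G \<subseteq> carrier G"
    using assms unfolding brace_lambda_def
    by (auto intro!: monoid.m_closed group.inv_closed group.is_monoid)
qed

definition genI :: "'a monoid \<Rightarrow> 'a monoid \<Rightarrow> 'a set \<Rightarrow> 'a set" where
  "genI G C X = \<Inter>{K. brace_ideal G C K \<and> X \<subseteq> K}"

lemma genI_ideal:
  assumes "group G" "group C" "carrier C = carrier G" "X \<subseteq> carrier G"
  shows "brace_ideal G C (genI G C X)"
  unfolding genI_def
  apply (rule ideal_Inter[OF assms(1,2)])
  using ideal_carrier[OF assms(1-3)] assms(4) by auto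

lemma genI_le:
  assumes "brace_ideal G C Q"
  shows "genI G C X \<subseteq> Q \<longleftrightarrow> X \<subseteq> Q"
  using assms unfolding genI_def by blast

lemma genI_sub: "genI G C X \<subseteq> Q \<Longrightarrow> X \<subseteq> Q"
  unfolding genI_def by blast

lemma closure_point:
  assumes "P \<in> brace_Spec G C"
  shows "spec_closure G C {P} = brace_H G C P"
proof -
  have id: "brace_ideal G C P" using assms unfolding brace_Spec_def brace_prime_ideal_def by blast
  have "spec_closed G C (brace_H G C P)" unfolding spec_closed_def using id by blast
  moreover have "P \<in> brace_H G C P" using assms unfolding brace_H_def by blast
  moreover have "brace_H G C P \<subseteq> S" if "spec_closed G C S" "{P} \<subseteq> S" for S
    using that unfolding spec_closed_def brace_H_def by blast
  ultimately show ?thesis unfolding spec_closure_def by blast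
qed

lemma prime_ideal: "brace_prime_ideal G C Q \<Longrightarrow> brace_ideal G C Q"
  unfolding brace_prime_ideal_def by simp

lemma prime_ne: "brace_prime_ideal G C Q \<Longrightarrow> Q \<noteq> carrier G"
  unfolding brace_prime_ideal_def by simp

lemma prime_prop: "brace_prime_ideal G C Q \<Longrightarrow> I \<subseteq> carrier G \<Longrightarrow> J \<subseteq> carrier G
  \<Longrightarrow> brace_star_set G C I J \<subseteq> Q \<Longrightarrow> I \<subseteq> Q \<or> J \<subseteq> Q"
  unfolding brace_prime_ideal_def by blast

lemma ideal_sub: "brace_ideal G C Q \<Longrightarrow> Q \<subseteq> carrier G"
  unfolding brace_ideal_def using normal_imp_subgroup subgroup.subset by blast

theorem theorem4p11:
  fixes G C :: "'a monoid" and S :: "'a set set"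
  assumes "skew_brace G C"
    and "spec_irreducible G C S"
  shows "\<exists>!x. x \<in> S \<and> S = spec_closure G C {x}"
proof -
  have gG: "group G" and gC: "group C" and cc: "carrier C = carrier G"
    using assms(1) unfolding skew_brace_def by auto
  obtain I0 where I0: "brace_ideal G C I0" "S = brace_H G C I0"
    using assms(2) unfolding spec_irreducible_def spec_closed_def by blast
  have Sne: "S \<noteq> {}" using assms(2) unfolding spec_irreducible_def by blast
  have irr: "\<not> (\<exists>S1 S2. spec_closed G C S1 \<and> spec_closed G C S2 \<and> S1 \<subset> S \<and> S2 \<subset> S \<and> S = S1 \<union> S2)"
    using assms(2) unfolding spec_irreducible_def by blast
  have Sspec: "\<And>Q. Q \<in> S \<Longrightarrow> brace_prime_ideal G C Q"
    using I0(2) unfolding brace_H_def brace_Spec_def by blast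
  have I0sub: "\<And>Q. Q \<in> S \<Longrightarrow> I0 \<subseteq> Q" using I0(2) unfolding brace_H_def by blast
  have I0car: "I0 \<subseteq> carrier G" using I0(1) by (rule ideal_sub)
  define P where "P = \<Inter>S"
  have Pid: "brace_ideal G C P" unfolding P_def
    using ideal_Inter[OF gG gC Sne] Sspec prime_ideal by blast
  have Pne: "P \<noteq> carrier G"
  proof
    assume h: "P = carrier G"
    obtain Q where Q: "Q \<in> S" using Sne by blast
    have "Q \<subseteq> carrier G" using Sspec[OF Q] prime_ideal ideal_sub by blast
    moreover have "P \<subseteq> Q" using Q P_def by blast
    ultimately show False using h Sspec[OF Q] prime_ne by blast
  qed
  have closedX: "spec_closed G C {Q \<in> S. X \<subseteq> Q}" if "X \<subseteq> carrier G" for X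
  proof -
    have XI: "I0 \<union> X \<subseteq> carrier G" using that I0car by blast
    have "{Q \<in> S. X \<subseteq> Q} = brace_H G C (genI G C (I0 \<union> X))"
    proof (intro equalityI subsetI)
      fix Q assume "Q \<in> {Q \<in> S. X \<subseteq> Q}"
      then have Q: "Q \<in> S" "X \<subseteq> Q" by auto
      have "brace_ideal G C Q" using Sspec[OF Q(1)] by (rule prime_ideal)
      then have "genI G C (I0 \<union> X) \<subseteq> Q" using genI_le Q I0sub by blast
      then show "Q \<in> brace_H G C (genI G C (I0 \<union> X))"
        using Q I0(2) unfolding brace_H_def by blast
    next
      fix Q assume "Q \<in> brace_H G C (genI G C (I0 \<union> X))"
      then have "Q \<in> brace_Spec G C" "I0 \<union> X \<subseteq> Q" unfolding brace_H_def
        using genI_sub by blast+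
      then show "Q \<in> {Q \<in> S. X \<subseteq> Q}" using I0(2) unfolding brace_H_def by blast
    qed
    then show ?thesis unfolding spec_closed_def using genI_ideal[OF gG gC cc XI] by blast
  qed
  have Pprime: "brace_prime_ideal G C P"
    unfolding brace_prime_ideal_def
  proof (intro conjI Pid Pne allI impI)
    fix I J assume IJ: "I \<subseteq> carrier G" "J \<subseteq> carrier G" "brace_star_set G C I J \<subseteq> P"
    show "I \<subseteq> P \<or> J \<subseteq> P"
    proof (rule ccontr)
      assume nn: "\<not> (I \<subseteq> P \<or> J \<subseteq> P)"
      have un: "S = {Q \<in> S. I \<subseteq> Q} \<union> {Q \<in> S. J \<subseteq> Q}"
      proof (intro equalityI subsetI)
        fix Q assume Q: "Q \<in> S"
        have "brace_star_set G C I J \<subseteq> Q" using IJ(3) Q P_def by blast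
        then have "I \<subseteq> Q \<or> J \<subseteq> Q" using prime_prop[OF Sspec[OF Q] IJ(1,2)] by blast
        then show "Q \<in> {Q \<in> S. I \<subseteq> Q} \<union> {Q \<in> S. J \<subseteq> Q}" using Q by blast
      qed auto
      have s1: "{Q \<in> S. I \<subseteq> Q} \<subset> S"
      proof -
        have "{Q \<in> S. I \<subseteq> Q} \<noteq> S" using nn P_def by blast
        then show ?thesis by blast
      qed
      have s2: "{Q \<in> S. J \<subseteq> Q} \<subset> S"
      proof -
        have "{Q \<in> S. J \<subseteq> Q} \<noteq> S" using nn P_def by blast
        then show ?thesis by blast
      qed
      have "\<exists>S1 S2. spec_closed G C S1 \<and> spec_closed G C S2 \<and> S1 \<subset> S \<and> S2 \<subset> S \<and> S = S1 \<union> S2"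
        apply (rule exI[of _ "{Q \<in> S. I \<subseteq> Q}"], rule exI[of _ "{Q \<in> S. J \<subseteq> Q}"])
        using closedX[OF IJ(1)] closedX[OF IJ(2)] s1 s2 un by simp
      then show False using irr by simp
    qed
  qed
  have PSpec: "P \<in> brace_Spec G C" using Pprime unfolding brace_Spec_def by blast
  have PS: "P \<in> S"
  proof -
    have "I0 \<subseteq> P" using I0sub P_def Sne by blast
    then show ?thesis using PSpec I0(2) unfolding brace_H_def by blast
  qed
  have HP: "brace_H G C P = S"
  proof (intro equalityI subsetI)
    fix Q assume "Q \<in> brace_H G C P"
    then have "Q \<in> brace_Spec G C" "P \<subseteq> Q" unfolding brace_H_def by auto
    moreover have "I0 \<subseteq> P" using I0sub P_def Sne by blast
    ultimately show "Q \<in> S" using I0(2) unfolding brace_H_def by blast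
  next
    fix Q assume "Q \<in> S"
    then show "Q \<in> brace_H G C P" using Sspec unfolding brace_H_def brace_Spec_def P_def by blast
  qed
  show ?thesis
  proof (rule ex1I[of _ P])
    show "P \<in> S \<and> S = spec_closure G C {P}" using PS HP closure_point[OF PSpec] by simp
  next
    fix x assume x: "x \<in> S \<and> S = spec_closure G C {x}"
    have xs: "x \<in> brace_Spec G C" using x Sspec unfolding brace_Spec_def by blast
    have Hx: "brace_H G C x = S" using x closure_point[OF xs] by simp
    have "P \<subseteq> x" using x P_def by blast
    moreover have "x \<subseteq> P" using Hx PS unfolding brace_H_def by blast
    ultimately show "x = P" by blast
  qed
qed

end
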